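(* Under the standing assumptions in the context, let $v\in S$ and for an integer $i$ let $A_v^i$ be the set of simple graphs on $[n]$ with degree sequence $\mathbf d$ in which $v$ has exactly $i$ neighbours in $S$. Then for integers $0\le i<d(v)$, $$\frac{|A_v^i|}{|A_v^{i+1}|}=\frac{i+1}{d(v)-i}\cdot\frac{d(\bar S)}{d(S)}\left(1+O\!\left(\frac{\Delta^2}{d(S)}\right)\right).$$
   Context: All asymptotics are as $n\to\infty$. For each $n$, $\mathbf d=(d(1),\dots,d(n))$ is a sequence of integers with $1\le d(1)\le\dots\le d(n)$ and even sum; $M=\sum_i d(i)$, $\Delta=d(n)$, $d(A)=\sum_{i\in A}d(i)$. $S\subseteq[n]$ is a given set, $\bar S=[n]\setminus S$, $\gamma=d(S)/M$. Standing assumptions: there is $\delta=\delta(n)\to0$ with $\delta^{-1}=O(\log\log M)$ and $\Delta^2(\gamma^{-1}\log M)^{12}\le\delta\,d(S)$, and a constant $c>0$ with $\gamma<1-c$. *)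

theory Defs
  imports "HOL-Analysis.Analysis" "HOL-Library.Landau_Symbols"
begin

definition simple_graphs :: "nat \<Rightarrow> nat set set set" where
  "simple_graphs n = {E. \<forall>e\<in>E. \<exists>x y. e = {x, y} \<and> x \<noteq> y \<and> x \<in> {1..n} \<and> y \<in> {1..n}}"

definition degree :: "nat set set \<Rightarrow> nat \<Rightarrow> nat" where
  "degree E x = card {e\<in>E. x \<in> e}"

definition graphs_with_degrees :: "nat \<Rightarrow> (nat \<Rightarrow> nat) \<Rightarrow> nat set set set" where
  "graphs_with_degrees n dd = {E \<in> simple_graphs n. \<forall>x\<in>{1..n}. degree E x = dd x}"

definition A_set :: "nat \<Rightarrow> (nat \<Rightarrow> nat) \<Rightarrow> nat set \<Rightarrow> nat \<Rightarrow> nat \<Rightarrow> nat set set set" where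
  "A_set n dd S v i = {E \<in> graphs_with_degrees n dd. card {u\<in>S. {u, v} \<in> E} = i}"

end

theory Submission
  imports Defs
begin


lemma arith_core:
  fixes ra rb k j E rS rT c :: real
  assumes rb: "rb > 0" and k: "k > 0" and j: "j > 0" and rS: "rS > 0" and c: "c > 0"
    and E: "E \<ge> 0" and ra: "ra \<ge> 0" and h8: "8 * E \<le> rS" and hT: "c * rS \<le> rT"
    and i1: "ra * (k * (rS - 4 * E)) \<le> rb * (j * rT)"
    and i2: "rb * (j * (rT - 3 * E)) \<le> ra * (k * rS)"
  shows "\<bar>ra / rb - (j / k) * (rT / rS)\<bar> \<le> (8 + 3 / c) * ((j / k) * (rT / rS)) * (E / rS)"
proof -
  define P where "P = k * rS"
  define Q where "Q = j * rT"
  have P: "P > 0" unfolding P_def using k rS by simp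
  have rT: "rT > 0" using hT c rS by (smt (verit) mult_pos_pos)
  have Q: "Q > 0" unfolding Q_def using j rT by simp
  define x where "x = Q / P"
  have xe: "(j / k) * (rT / rS) = x" unfolding x_def P_def Q_def by simp
  have x0: "x \<ge> 0" unfolding x_def using P Q by simp
  define y where "y = x * (E / rS)"
  have y0: "y \<ge> 0" unfolding y_def using x0 E rS by simp
  have a1: "ra * P * (rS - 4 * E) \<le> rb * Q * rS"
  proof -
    have "ra * (k * (rS - 4 * E)) * rS \<le> rb * (j * rT) * rS" using i1 rS by (simp add: mult_right_mono)
    thus ?thesis unfolding P_def Q_def by (simp add: algebra_simps)
  qed
  have a2: "ra * P \<le> 2 * (rb * Q)"
  proof -
    have "ra * k * (rS / 2) \<le> ra * k * (rS - 4 * E)"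
      using h8 ra k by (intro mult_left_mono) (auto)
    hence "ra * k * (rS / 2) \<le> rb * Q" using i1 unfolding Q_def by (simp add: algebra_simps)
    thus ?thesis unfolding P_def by (simp add: algebra_simps)
  qed
  have up0: "ra * P * rS \<le> rb * Q * (rS + 8 * E)"
  proof -
    have "ra * P * rS = ra * P * (rS - 4 * E) + 4 * E * (ra * P)" by (simp add: algebra_simps)
    also have "\<dots> \<le> rb * Q * rS + 4 * E * (2 * (rb * Q))"
      using a1 a2 E by (intro add_mono mult_left_mono) auto
    also have "\<dots> = rb * Q * (rS + 8 * E)" by (simp add: algebra_simps)
    finally show ?thesis .
  qed
  have up: "ra / rb \<le> x + 8 * y"
  proof -
    have "x + 8 * y = Q * (rS + 8 * E) / (P * rS)" unfolding x_def y_def using P rS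
      by (simp add: field_simps)
    moreover have "ra / rb \<le> Q * (rS + 8 * E) / (P * rS)"
      using up0 rb P rS by (simp add: field_simps)
    ultimately show ?thesis by simp
  qed
  have b1: "rb * Q - ra * P \<le> 3 * rb * j * E"
    using i2 unfolding P_def Q_def by (simp add: algebra_simps)
  have b2: "3 * rb * j * E \<le> (3 / c) * (rb * Q * E / rS)"
  proof -
    have "j * (c * rS) \<le> j * rT" using hT j by simp
    hence "3 * rb * j * E * (c * rS) \<le> 3 * rb * E * Q" unfolding Q_def using rb E
      by (smt (verit) mult.commute mult.left_commute mult_left_mono zero_le_mult_iff)
    thus ?thesis using c rS by (simp add: field_simps)
  qed
  have lo: "x - (3 / c) * y \<le> ra / rb"
  proof -
    have "rb * Q - (3 / c) * (rb * Q * E / rS) \<le> ra * P" using b1 b2 by linarith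
    hence "(rb * Q - (3 / c) * (rb * Q * E / rS)) / (rb * P) \<le> ra * P / (rb * P)"
      using rb P by (intro divide_right_mono) auto
    moreover have "(rb * Q - (3 / c) * (rb * Q * E / rS)) / (rb * P) = x - (3 / c) * y"
      unfolding x_def y_def using rb P rS by (simp add: field_simps)
    moreover have "ra * P / (rb * P) = ra / rb" using P by simp
    ultimately show ?thesis by simp
  qed
  have "(8 + 3 / c) * x * (E / rS) = 8 * y + (3 / c) * y" unfolding y_def by (simp add: algebra_simps)
  moreover have "(3 / c) * y \<ge> 0" using c y0 by simp
  ultimately show ?thesis unfolding xe using up lo y0 by (simp add: abs_le_iff) 
qed



lemma sg_mem: "E \<in> simple_graphs n \<Longrightarrow> e \<in> E \<Longrightarrow> \<exists>x y. e = {x,y} \<and> x \<noteq> y \<and> x \<in> {1..n} \<and> y \<in> {1..n}"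
  by (auto simp: simple_graphs_def)

lemma sg_edge: "E \<in> simple_graphs n \<Longrightarrow> {x,y} \<in> E \<Longrightarrow> x \<noteq> y \<and> x \<in> {1..n} \<and> y \<in> {1..n}"
  by (drule (1) sg_mem) (auto simp: doubleton_eq_iff)

lemma sg_sub: "E \<in> simple_graphs n \<Longrightarrow> E \<subseteq> Pow {1..n}"
  by (auto simp: simple_graphs_def)

lemma sg_finite_all: "finite (simple_graphs n)"
proof -
  have "simple_graphs n \<subseteq> Pow (Pow {1..n})" using sg_sub by blast
  thus ?thesis by (rule finite_subset) auto
qed

lemma sg_finite: "E \<in> simple_graphs n \<Longrightarrow> finite E"
  using sg_sub finite_subset by (metis finite_Pow_iff finite_atLeastAtMost)

lemma sg_insert: "E \<in> simple_graphs n \<Longrightarrow> x \<noteq> y \<Longrightarrow> x \<in> {1..n} \<Longrightarrow> y \<in> {1..n} \<Longrightarrow> insert {x,y} E \<in> simple_graphs n"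
  by (auto simp: simple_graphs_def)

lemma sg_diff: "E \<in> simple_graphs n \<Longrightarrow> E - X \<in> simple_graphs n"
  by (auto simp: simple_graphs_def)

definition nb :: "nat set set \<Rightarrow> nat \<Rightarrow> nat set" where "nb E x = {y. {x,y} \<in> E}"

lemma nb_sub: "E \<in> simple_graphs n \<Longrightarrow> nb E x \<subseteq> {1..n}"
  unfolding nb_def using sg_edge[of E n x] by blast

lemma nb_finite: "E \<in> simple_graphs n \<Longrightarrow> finite (nb E x)"
  using nb_sub[of E n x] finite_subset by blast

lemma nb_irr: "E \<in> simple_graphs n \<Longrightarrow> x \<notin> nb E x"
  using sg_edge[of E n x x] by (auto simp: nb_def)

lemma nb_sym: "y \<in> nb E x \<longleftrightarrow> x \<in> nb E y"
  by (auto simp: nb_def insert_commute)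

lemma nb_out: "E \<in> simple_graphs n \<Longrightarrow> x \<notin> {1..n} \<Longrightarrow> nb E x = {}"
  unfolding nb_def using sg_edge[of E n x] by blast

lemma card_nb: assumes "E \<in> simple_graphs n" shows "card (nb E x) = degree E x"
proof -
  have "bij_betw (\<lambda>y. {x,y}) (nb E x) {e\<in>E. x \<in> e}"
  proof (rule bij_betwI')
    show "\<And>y z. y \<in> nb E x \<Longrightarrow> z \<in> nb E x \<Longrightarrow> ({x, y} = {x, z}) = (y = z)"
      by (auto simp: doubleton_eq_iff)
    show "\<And>y. y \<in> nb E x \<Longrightarrow> {x, y} \<in> {e \<in> E. x \<in> e}" by (auto simp: nb_def)
    show "\<And>e. e \<in> {e \<in> E. x \<in> e} \<Longrightarrow> \<exists>y\<in>nb E x. e = {x, y}"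
    proof -
      fix e assume e: "e \<in> {e \<in> E. x \<in> e}"
      then obtain p q where "e = {p,q}" using sg_mem[OF assms] by blast
      with e show "\<exists>y\<in>nb E x. e = {x, y}" by (auto simp: nb_def insert_commute)
    qed
  qed
  thus ?thesis unfolding degree_def by (rule bij_betw_same_card)
qed

lemma degree_swap:
  assumes "finite G" "X \<subseteq> G" "Y \<inter> G = {}" "finite Y"
  shows "degree (G - X \<union> Y) z + card {e\<in>X. z \<in> e} = degree G z + card {e\<in>Y. z\<in>e}"
proof -
  have fX: "finite X" using assms finite_subset by blast
  have eq: "{e \<in> G - X \<union> Y. z\<in>e} = ({e\<in>G. z\<in>e} - {e\<in>X. z \<in> e}) \<union> {e\<in>Y. z\<in>e}" by auto
  have "card ({e\<in>G. z\<in>e} - {e\<in>X. z \<in> e} \<union> {e\<in>Y. z\<in>e})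
     = card ({e\<in>G. z\<in>e} - {e\<in>X. z \<in> e}) + card {e\<in>Y. z\<in>e}"
    by (rule card_Un_disjoint) (use assms in auto)
  also have "card ({e\<in>G. z\<in>e} - {e\<in>X. z \<in> e}) = card {e\<in>G. z\<in>e} - card {e\<in>X. z \<in> e}"
    by (rule card_Diff_subset) (use assms fX in auto)
  moreover have "card {e\<in>X. z \<in> e} \<le> card {e\<in>G. z\<in>e}"
    by (rule card_mono) (use assms in auto)
  ultimately show ?thesis unfolding degree_def eq by linarith
qed

lemma inc2: assumes "distinct [p,q,r,s]"
  shows "card {e\<in>{{p,q},{r,s}}. z \<in> e} = (if z \<in> {p,q,r,s} then 1 else 0)"
proof -
  have "{e\<in>{{p,q},{r,s}}. z \<in> e} = (if z \<in> {p,q} then {{p,q}} else if z \<in> {r,s} then {{r,s}} else {})"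
    using assms by auto
  thus ?thesis by auto
qed

lemma swap_ok:
  assumes G: "G \<in> simple_graphs n" and e1: "{p,q} \<in> G" and e2: "{r,s} \<in> G"
    and n1: "{p,r} \<notin> G" and n2: "{q,s} \<notin> G" and dist: "distinct [p,q,r,s]"
  shows "G - {{p,q},{r,s}} \<union> {{p,r},{q,s}} \<in> simple_graphs n"
    and "degree (G - {{p,q},{r,s}} \<union> {{p,r},{q,s}}) z = degree G z"
proof -
  have "p \<in> {1..n}" "q \<in> {1..n}" "r \<in> {1..n}" "s \<in> {1..n}"
    using sg_edge[OF G e1] sg_edge[OF G e2] by auto
  hence "insert {p,r} (insert {q,s} (G - {{p,q},{r,s}})) \<in> simple_graphs n"
    using dist by (intro sg_insert sg_diff G) auto
  thus "G - {{p,q},{r,s}} \<union> {{p,r},{q,s}} \<in> simple_graphs n" by simp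
  have d2: "distinct [p,r,q,s]" using dist by auto
  show "degree (G - {{p,q},{r,s}} \<union> {{p,r},{q,s}}) z = degree G z"
  proof -
    have h: "degree (G - {{p,q},{r,s}} \<union> {{p,r},{q,s}}) z + card {e\<in>{{p,q},{r,s}}. z \<in> e}
       = degree G z + card {e\<in>{{p,r},{q,s}}. z \<in> e}"
      by (rule degree_swap) (use sg_finite[OF G] e1 e2 n1 n2 in auto)
    have "card {e\<in>{{p,q},{r,s}}. z \<in> e} = card {e\<in>{{p,r},{q,s}}. z \<in> e}"
      unfolding inc2[OF dist] inc2[OF d2] by (simp add: insert_commute)
    with h show ?thesis by linarith
  qed
qed



definition Fib :: "nat set \<Rightarrow> nat \<Rightarrow> nat set set \<Rightarrow> nat \<Rightarrow> (nat \<times> nat) set" where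
 "Fib S v G u = {(a,b). a \<in> S \<and> {a,b} \<in> G \<and> a \<noteq> v \<and> b \<noteq> u \<and> {v,a} \<notin> G \<and> {u,b} \<notin> G}"
definition Bib :: "nat set \<Rightarrow> nat \<Rightarrow> nat set set \<Rightarrow> nat \<Rightarrow> (nat \<times> nat) set" where
 "Bib T v G a = {(u,b). u \<in> T \<and> {u,b} \<in> G \<and> b \<noteq> a \<and> {v,u} \<notin> G \<and> {a,b} \<notin> G}"

lemma cnt_eq: "{u\<in>S. {u,v} \<in> E} = S \<inter> nb E v"
  by (auto simp: nb_def insert_commute)

lemma A_alt: "A_set n dd S v i = {E \<in> graphs_with_degrees n dd. card (S \<inter> nb E v) = i}"
  unfolding A_set_def cnt_eq ..

lemma gwd_sg: "G \<in> graphs_with_degrees n dd \<Longrightarrow> G \<in> simple_graphs n"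
  by (simp add: graphs_with_degrees_def)

lemma gwd_deg: "G \<in> graphs_with_degrees n dd \<Longrightarrow> x \<in> {1..n} \<Longrightarrow> card (nb G x) = dd x"
  using card_nb[of G n x] by (simp add: graphs_with_degrees_def)

lemma deg_le: assumes "G \<in> graphs_with_degrees n dd" "\<forall>x\<in>{1..n}. dd x \<le> D"
  shows "card (nb G x) \<le> D"
proof (cases "x \<in> {1..n}")
  case True thus ?thesis using gwd_deg[OF assms(1) True] assms(2) by simp
next
  case False thus ?thesis using nb_out[OF gwd_sg[OF assms(1)] False] by simp
qed

lemma sig_card: "G \<in> simple_graphs n \<Longrightarrow> finite X \<Longrightarrow> card (Sigma X (nb G)) = (\<Sum>x\<in>X. card (nb G x))"
  by (rule card_SigmaI) (auto intro: nb_finite)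

lemma sig_finite: "G \<in> simple_graphs n \<Longrightarrow> finite X \<Longrightarrow> finite (Sigma X (nb G))"
  by (rule finite_SigmaI) (auto intro: nb_finite)

lemma sig_le: assumes "G \<in> graphs_with_degrees n dd" "\<forall>x\<in>{1..n}. dd x \<le> D" "finite X"
  shows "card (Sigma X (nb G)) \<le> card X * D"
proof -
  have "card (Sigma X (nb G)) = (\<Sum>x\<in>X. card (nb G x))" by (rule sig_card[OF gwd_sg[OF assms(1)] assms(3)])
  also have "\<dots> \<le> card X * D" using sum_bounded_above[of X "\<lambda>x. card (nb G x)" D] deg_le[OF assms(1,2)] by simp
  finally show ?thesis .
qed

lemma sig_sum: assumes "G \<in> graphs_with_degrees n dd" "X \<subseteq> {1..n}"
  shows "card (Sigma X (nb G)) = sum dd X"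
proof -
  have fX: "finite X" using assms(2) finite_subset by blast
  have "card (Sigma X (nb G)) = (\<Sum>x\<in>X. card (nb G x))" by (rule sig_card[OF gwd_sg[OF assms(1)] fX])
  also have "\<dots> = sum dd X" using gwd_deg[OF assms(1)] assms(2) by (intro sum.cong) auto
  finally show ?thesis .
qed

lemma Fib_lower:
  assumes G: "G \<in> graphs_with_degrees n dd" and dm: "\<forall>x\<in>{1..n}. dd x \<le> D" and S: "S \<subseteq> {1..n}"
  shows "sum dd S - 4 * D^2 \<le> card (Fib S v G u)"
proof -
  have sg: "G \<in> simple_graphs n" using G by (rule gwd_sg)
  have fS: "finite S" using S finite_subset by blast
  define B1 where "B1 = Sigma {v} (nb G)"
  define B2 where "B2 = Sigma (nb G v) (nb G)"
  define B3 where "B3 = {(a,b). b \<in> nb G u \<and> a \<in> nb G b}"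
  define B4 where "B4 = (\<lambda>a. (a,u)) ` nb G u"
  have c1: "card B1 \<le> D" using sig_le[OF G dm, of "{v}"] unfolding B1_def by simp
  have c2: "card B2 \<le> D * D" using sig_le[OF G dm, of "nb G v"] deg_le[OF G dm, of v] nb_finite[OF sg, of v]
    unfolding B2_def by (meson le_trans mult_le_mono1)
  have B3e: "B3 = prod.swap ` Sigma (nb G u) (nb G)" unfolding B3_def by force
  hence c3: "card B3 \<le> D * D" using sig_le[OF G dm, of "nb G u"] deg_le[OF G dm, of u] nb_finite[OF sg, of u]
    card_image_le[of "Sigma (nb G u) (nb G)" prod.swap] sig_finite[OF sg, of "nb G u"]
    by (metis le_trans mult_le_mono1)
  have c4: "card B4 \<le> D" unfolding B4_def using card_image_le[OF nb_finite[OF sg, of u], of "\<lambda>a. (a,u)"]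
    deg_le[OF G dm, of u] by linarith
  have fB: "finite (B1 \<union> B2 \<union> B3 \<union> B4)"
    unfolding B3e B1_def B2_def B4_def using sig_finite[OF sg] nb_finite[OF sg] by auto
  have cB: "card (B1 \<union> B2 \<union> B3 \<union> B4) \<le> 4 * D^2"
  proof -
    have "card (B1 \<union> B2 \<union> B3 \<union> B4) \<le> card B1 + card B2 + card B3 + card B4"
      by (meson card_Un_le add_le_mono le_trans order_refl)
    moreover have "D \<le> D * D" by (cases D) auto
    ultimately show ?thesis using c1 c2 c3 c4 unfolding power2_eq_square by linarith
  qed
  have sub: "Sigma S (nb G) - (B1 \<union> B2 \<union> B3 \<union> B4) \<subseteq> Fib S v G u"
    unfolding Fib_def B1_def B2_def B3_def B4_def by (auto simp: nb_def insert_commute)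
  have fF: "finite (Fib S v G u)"
    by (rule finite_subset[OF _ sig_finite[OF sg fS]]) (auto simp: Fib_def nb_def)
  have "sum dd S - 4 * D^2 \<le> card (Sigma S (nb G)) - card (B1 \<union> B2 \<union> B3 \<union> B4)"
    using sig_sum[OF G S] cB by linarith
  also have "\<dots> \<le> card (Sigma S (nb G) - (B1 \<union> B2 \<union> B3 \<union> B4))"
    by (rule diff_card_le_card_Diff[OF fB])
  also have "\<dots> \<le> card (Fib S v G u)" by (rule card_mono[OF fF sub])
  finally show ?thesis .
qed


lemma Bib_lower:
  assumes G: "G \<in> graphs_with_degrees n dd" and dm: "\<forall>x\<in>{1..n}. dd x \<le> D" and T: "T \<subseteq> {1..n}"
  shows "sum dd T - 3 * D^2 \<le> card (Bib T v G a)"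
proof -
  have sg: "G \<in> simple_graphs n" using G by (rule gwd_sg)
  have fT: "finite T" using T finite_subset by blast
  define B2 where "B2 = Sigma (nb G v) (nb G)"
  define B3 where "B3 = {(u,b). b \<in> nb G a \<and> u \<in> nb G b}"
  define B4 where "B4 = (\<lambda>u. (u,a)) ` nb G a"
  have c2: "card B2 \<le> D * D" using sig_le[OF G dm, of "nb G v"] deg_le[OF G dm, of v] nb_finite[OF sg, of v]
    unfolding B2_def by (meson le_trans mult_le_mono1)
  have B3e: "B3 = prod.swap ` Sigma (nb G a) (nb G)" unfolding B3_def by force
  hence c3: "card B3 \<le> D * D" using sig_le[OF G dm, of "nb G a"] deg_le[OF G dm, of a] nb_finite[OF sg, of a]
    card_image_le[of "Sigma (nb G a) (nb G)" prod.swap] sig_finite[OF sg, of "nb G a"]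
    by (metis le_trans mult_le_mono1)
  have c4: "card B4 \<le> D" unfolding B4_def using card_image_le[OF nb_finite[OF sg, of a], of "\<lambda>u. (u,a)"]
    deg_le[OF G dm, of a] by linarith
  have fB: "finite (B2 \<union> B3 \<union> B4)"
    unfolding B3e B2_def B4_def using sig_finite[OF sg] nb_finite[OF sg] by auto
  have cB: "card (B2 \<union> B3 \<union> B4) \<le> 3 * D^2"
  proof -
    have "card (B2 \<union> B3 \<union> B4) \<le> card B2 + card B3 + card B4"
      by (meson card_Un_le add_le_mono le_trans order_refl)
    moreover have "D \<le> D * D" by (cases D) auto
    ultimately show ?thesis using c2 c3 c4 unfolding power2_eq_square by linarith
  qed
  have sub: "Sigma T (nb G) - (B2 \<union> B3 \<union> B4) \<subseteq> Bib T v G a"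
    unfolding Bib_def B2_def B3_def B4_def by (auto simp: nb_def insert_commute)
  have fF: "finite (Bib T v G a)"
    by (rule finite_subset[OF _ sig_finite[OF sg fT]]) (auto simp: Bib_def nb_def)
  have "sum dd T - 3 * D^2 \<le> card (Sigma T (nb G)) - card (B2 \<union> B3 \<union> B4)"
    using sig_sum[OF G T] cB by linarith
  also have "\<dots> \<le> card (Sigma T (nb G) - (B2 \<union> B3 \<union> B4))"
    by (rule diff_card_le_card_Diff[OF fB])
  also have "\<dots> \<le> card (Bib T v G a)" by (rule card_mono[OF fF sub])
  finally show ?thesis .
qed

lemma Fib_upper: assumes "G \<in> graphs_with_degrees n dd" "S \<subseteq> {1..n}"
  shows "card (Fib S v G u) \<le> sum dd S"
proof -
  have sg: "G \<in> simple_graphs n" using assms(1) by (rule gwd_sg)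
  have fS: "finite S" using assms(2) finite_subset by blast
  have "card (Fib S v G u) \<le> card (Sigma S (nb G))"
    by (rule card_mono[OF sig_finite[OF sg fS]]) (auto simp: Fib_def nb_def)
  thus ?thesis using sig_sum[OF assms] by simp
qed

lemma Bib_upper: assumes "G \<in> graphs_with_degrees n dd" "T \<subseteq> {1..n}"
  shows "card (Bib T v G a) \<le> sum dd T"
proof -
  have sg: "G \<in> simple_graphs n" using assms(1) by (rule gwd_sg)
  have fS: "finite T" using assms(2) finite_subset by blast
  have "card (Bib T v G a) \<le> card (Sigma T (nb G))"
    by (rule card_mono[OF sig_finite[OF sg fS]]) (auto simp: Bib_def nb_def)
  thus ?thesis using sig_sum[OF assms] by simp
qed

lemma Fib_finite: "G \<in> simple_graphs n \<Longrightarrow> finite S \<Longrightarrow> finite (Fib S v G u)"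
  by (rule finite_subset[OF _ sig_finite[of G n S]]) (auto simp: Fib_def nb_def)

lemma Bib_finite: "G \<in> simple_graphs n \<Longrightarrow> finite T \<Longrightarrow> finite (Bib T v G u)"
  by (rule finite_subset[OF _ sig_finite[of G n T]]) (auto simp: Bib_def nb_def)

lemma nb_swap_p: assumes "distinct [p,q,r,s]"
  shows "nb (G - {{p,q},{r,s}} \<union> {{p,r},{q,s}}) p = insert r (nb G p - {q})"
  using assms unfolding nb_def by (auto simp: doubleton_eq_iff)

lemma swap_back: "X \<subseteq> G \<Longrightarrow> Y \<inter> G = {} \<Longrightarrow> (G - X \<union> Y) - Y \<union> X = G"
  by auto

lemma split_nb: assumes G: "G \<in> graphs_with_degrees n dd" and S: "S \<subseteq> {1..n}" and v: "v \<in> {1..n}"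
  shows "card (({1..n} - S) \<inter> nb G v) = dd v - card (S \<inter> nb G v)"
proof -
  have sg: "G \<in> simple_graphs n" using G by (rule gwd_sg)
  have e: "nb G v = (S \<inter> nb G v) \<union> (({1..n} - S) \<inter> nb G v)" using nb_sub[OF sg, of v] by blast
  have "card (nb G v) = card (S \<inter> nb G v) + card (({1..n} - S) \<inter> nb G v)"
    by (subst e, rule card_Un_disjoint) (use nb_finite[OF sg, of v] in auto)
  thus ?thesis using gwd_deg[OF G v] by linarith
qed



lemma fwd_step:
  assumes S: "S \<subseteq> {1..n}" and vS: "v \<in> S" and G: "G \<in> A_set n dd S v i"
    and u: "u \<in> ({1..n} - S) \<inter> nb G v" and ab: "(a,b) \<in> Fib S v G u"
  defines "G' \<equiv> G - {{v,u},{a,b}} \<union> {{v,a},{u,b}}"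
  shows "G' \<in> A_set n dd S v (Suc i)"
    and "(a,(u,b)) \<in> Sigma (S \<inter> nb G' v) (Bib ({1..n} - S) v G')"
    and "G' - {{v,a},{u,b}} \<union> {{v,u},{a,b}} = G"
proof -
  have Gw: "G \<in> graphs_with_degrees n dd" and ci: "card (S \<inter> nb G v) = i" using G by (auto simp: A_alt)
  have sg: "G \<in> simple_graphs n" using Gw by (rule gwd_sg)
  have uT: "u \<notin> S" "u \<in> {1..n}" and vu: "{v,u} \<in> G" using u by (auto simp: nb_def)
  have aS: "a \<in> S" and abG: "{a,b} \<in> G" and av: "a \<noteq> v" and bu: "b \<noteq> u" and va: "{v,a} \<notin> G"
    and ub: "{u,b} \<notin> G" using ab by (auto simp: Fib_def)
  have bv: "b \<noteq> v" using abG va by (auto simp: insert_commute)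
  have anb: "a \<noteq> b" using sg_edge[OF sg abG] by simp
  have dist: "distinct [v,u,a,b]" using vS uT aS av bv bu anb by auto
  have sw1: "G' \<in> simple_graphs n" and sw2: "\<And>z. degree G' z = degree G z"
    using swap_ok[OF sg vu abG va ub dist] unfolding G'_def by auto
  have Gw': "G' \<in> graphs_with_degrees n dd" using sw1 sw2 Gw by (simp add: graphs_with_degrees_def)
  have nbv: "nb G' v = insert a (nb G v - {u})" unfolding G'_def by (rule nb_swap_p[OF dist])
  have anb2: "a \<notin> nb G v" using va by (simp add: nb_def)
  have "S \<inter> nb G' v = insert a (S \<inter> nb G v)" using nbv aS uT by auto
  hence "card (S \<inter> nb G' v) = Suc i" using anb2 ci nb_finite[OF sg, of v] by simp
  thus "G' \<in> A_set n dd S v (Suc i)" using Gw' by (simp add: A_alt)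
  show "(a,(u,b)) \<in> Sigma (S \<inter> nb G' v) (Bib ({1..n} - S) v G')"
    using dist aS uT nbv unfolding Bib_def G'_def by (auto simp: doubleton_eq_iff)
  show "G' - {{v,a},{u,b}} \<union> {{v,u},{a,b}} = G"
    unfolding G'_def by (rule swap_back) (use vu abG va ub in auto)
qed

lemma bwd_step:
  assumes S: "S \<subseteq> {1..n}" and vS: "v \<in> S" and G: "G \<in> A_set n dd S v (Suc i)"
    and a: "a \<in> S \<inter> nb G v" and ub: "(u,b) \<in> Bib ({1..n} - S) v G a"
  defines "G' \<equiv> G - {{v,a},{u,b}} \<union> {{v,u},{a,b}}"
  shows "G' \<in> A_set n dd S v i"
    and "(u,(a,b)) \<in> Sigma (({1..n} - S) \<inter> nb G' v) (Fib S v G')"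
    and "G' - {{v,u},{a,b}} \<union> {{v,a},{u,b}} = G"
proof -
  have Gw: "G \<in> graphs_with_degrees n dd" and ci: "card (S \<inter> nb G v) = Suc i" using G by (auto simp: A_alt)
  have sg: "G \<in> simple_graphs n" using Gw by (rule gwd_sg)
  have aS: "a \<in> S" and va: "{v,a} \<in> G" using a by (auto simp: nb_def)
  have uT: "u \<notin> S" "u \<in> {1..n}" and ubG: "{u,b} \<in> G" and ba: "b \<noteq> a" and vu: "{v,u} \<notin> G"
    and abG: "{a,b} \<notin> G" using ub by (auto simp: Bib_def)
  have bv: "b \<noteq> v" using ubG vu by (auto simp: insert_commute)
  have av: "a \<noteq> v" using sg_edge[OF sg va] by simp
  have unb: "u \<noteq> b" using sg_edge[OF sg ubG] by simp
  have dist: "distinct [v,a,u,b]" using vS uT aS av bv ba unb by auto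
  have sw1: "G' \<in> simple_graphs n" and sw2: "\<And>z. degree G' z = degree G z"
    using swap_ok[OF sg va ubG vu abG dist] unfolding G'_def by auto
  have Gw': "G' \<in> graphs_with_degrees n dd" using sw1 sw2 Gw by (simp add: graphs_with_degrees_def)
  have nbv: "nb G' v = insert u (nb G v - {a})" unfolding G'_def by (rule nb_swap_p[OF dist])
  have "S \<inter> nb G' v = (S \<inter> nb G v) - {a}" using nbv aS uT by auto
  hence "card (S \<inter> nb G' v) = i" using a ci nb_finite[OF sg, of v] by simp
  thus "G' \<in> A_set n dd S v i" using Gw' by (simp add: A_alt)
  show "(u,(a,b)) \<in> Sigma (({1..n} - S) \<inter> nb G' v) (Fib S v G')"
    using dist aS uT nbv unfolding Fib_def G'_def by (auto simp: doubleton_eq_iff)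
  show "G' - {{v,u},{a,b}} \<union> {{v,a},{u,b}} = G"
    unfolding G'_def by (rule swap_back) (use va ubG vu abG in auto)
qed


lemma A_finite: "finite (A_set n dd S v i)"
  by (rule finite_subset[OF _ sg_finite_all[of n]]) (auto simp: A_set_def graphs_with_degrees_def)

lemma A_gwd: "G \<in> A_set n dd S v i \<Longrightarrow> G \<in> graphs_with_degrees n dd"
  by (simp add: A_set_def)

lemma count_eq:
  assumes S: "S \<subseteq> {1..n}" and vS: "v \<in> S"
  shows "(\<Sum>G\<in>A_set n dd S v i. card (Sigma (({1..n} - S) \<inter> nb G v) (Fib S v G)))
       = (\<Sum>G\<in>A_set n dd S v (Suc i). card (Sigma (S \<inter> nb G v) (Bib ({1..n} - S) v G)))"
proof -
  define T where "T = {1..n} - S"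
  define P where "P = Sigma (A_set n dd S v i) (\<lambda>G. Sigma (T \<inter> nb G v) (Fib S v G))"
  define Q where "Q = Sigma (A_set n dd S v (Suc i)) (\<lambda>G. Sigma (S \<inter> nb G v) (Bib T v G))"
  define f where "f = (\<lambda>(G::nat set set,u::nat,a::nat,b::nat). (G - {{v,u},{a,b}} \<union> {{v,a},{u,b}}, a, u, b))"
  define g where "g = (\<lambda>(G::nat set set,a::nat,u::nat,b::nat). (G - {{v,a},{u,b}} \<union> {{v,u},{a,b}}, u, a, b))"
  have fS: "finite S" using S finite_subset by blast
  have fT: "finite T" unfolding T_def by simp
  have "bij_betw f P Q"
  proof (rule bij_betw_byWitness[where f'=g])
    show "\<forall>x\<in>P. g (f x) = x"
    proof
      fix x assume "x \<in> P"
      then obtain G u a b where x: "x = (G,u,a,b)" and G: "G \<in> A_set n dd S v i"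
        and u: "u \<in> ({1..n} - S) \<inter> nb G v" and ab: "(a,b) \<in> Fib S v G u"
        unfolding P_def T_def by auto
      show "g (f x) = x" unfolding x f_def g_def using fwd_step(3)[OF S vS G u ab] by simp
    qed
    show "\<forall>x\<in>Q. f (g x) = x"
    proof
      fix x assume "x \<in> Q"
      then obtain G a u b where x: "x = (G,a,u,b)" and G: "G \<in> A_set n dd S v (Suc i)"
        and a: "a \<in> S \<inter> nb G v" and ub: "(u,b) \<in> Bib ({1..n} - S) v G a"
        unfolding Q_def T_def by auto
      show "f (g x) = x" unfolding x f_def g_def using bwd_step(3)[OF S vS G a ub] by simp
    qed
    show "f ` P \<subseteq> Q"
    proof
      fix y assume "y \<in> f ` P"
      then obtain G u a b where y: "y = f (G,u,a,b)" and p: "(G,u,a,b) \<in> P" by auto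
      from p have G: "G \<in> A_set n dd S v i"
        and u: "u \<in> ({1..n} - S) \<inter> nb G v" and ab: "(a,b) \<in> Fib S v G u"
        unfolding P_def T_def by auto
      show "y \<in> Q" unfolding y f_def Q_def using fwd_step(1,2)[OF S vS G u ab]
        unfolding T_def by simp
    qed
    show "g ` Q \<subseteq> P"
    proof
      fix y assume "y \<in> g ` Q"
      then obtain G a u b where y: "y = g (G,a,u,b)" and q: "(G,a,u,b) \<in> Q" by auto
      from q have G: "G \<in> A_set n dd S (v) (Suc i)" and a: "a \<in> S \<inter> nb G v" and ub: "(u,b) \<in> Bib T v G a"
        unfolding Q_def by auto
      show "y \<in> P" unfolding y g_def P_def using bwd_step(1,2)[OF S vS G a ub[unfolded T_def]]
        unfolding T_def by simp
    qed
  qed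
  hence "card P = card Q" by (rule bij_betw_same_card)
  moreover have "card P = (\<Sum>G\<in>A_set n dd S v i. card (Sigma (T \<inter> nb G v) (Fib S v G)))"
    unfolding P_def
    by (rule card_SigmaI[OF A_finite]) (auto intro!: finite_SigmaI Fib_finite[OF _ fS] gwd_sg A_gwd simp: fT)
  moreover have "card Q = (\<Sum>G\<in>A_set n dd S v (Suc i). card (Sigma (S \<inter> nb G v) (Bib T v G)))"
    unfolding Q_def
    by (rule card_SigmaI[OF A_finite]) (auto intro!: finite_SigmaI Bib_finite[OF _ fT] gwd_sg A_gwd simp: fS)
  ultimately show ?thesis unfolding T_def by simp
qed


lemma Fw_bounds:
  assumes S: "S \<subseteq> {1..n}" and vS: "v \<in> S" and dm: "\<forall>x\<in>{1..n}. dd x \<le> D"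
    and G: "G \<in> A_set n dd S v i"
  shows "(dd v - i) * (sum dd S - 4 * D^2) \<le> card (Sigma (({1..n} - S) \<inter> nb G v) (Fib S v G))"
    and "card (Sigma (({1..n} - S) \<inter> nb G v) (Fib S v G)) \<le> (dd v - i) * sum dd S"
proof -
  have Gw: "G \<in> graphs_with_degrees n dd" and ci: "card (S \<inter> nb G v) = i" using G by (auto simp: A_alt)
  have sg: "G \<in> simple_graphs n" using Gw by (rule gwd_sg)
  have fS: "finite S" using S finite_subset by blast
  have v: "v \<in> {1..n}" using S vS by auto
  have cT: "card (({1..n} - S) \<inter> nb G v) = dd v - i" using split_nb[OF Gw S v] ci by simp
  have e: "card (Sigma (({1..n} - S) \<inter> nb G v) (Fib S v G)) = (\<Sum>u\<in>({1..n} - S) \<inter> nb G v. card (Fib S v G u))"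
    by (rule card_SigmaI) (auto intro: Fib_finite[OF sg fS])
  show "(dd v - i) * (sum dd S - 4 * D^2) \<le> card (Sigma (({1..n} - S) \<inter> nb G v) (Fib S v G))"
    unfolding e using sum_bounded_below[of "({1..n} - S) \<inter> nb G v" "sum dd S - 4 * D^2" "\<lambda>u. card (Fib S v G u)"]
      Fib_lower[OF Gw dm S] cT by simp
  show "card (Sigma (({1..n} - S) \<inter> nb G v) (Fib S v G)) \<le> (dd v - i) * sum dd S"
    unfolding e using sum_bounded_above[of "({1..n} - S) \<inter> nb G v" "\<lambda>u. card (Fib S v G u)" "sum dd S"]
      Fib_upper[OF Gw S] cT by simp
qed

lemma Bw_bounds:
  assumes S: "S \<subseteq> {1..n}" and vS: "v \<in> S" and dm: "\<forall>x\<in>{1..n}. dd x \<le> D"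
    and G: "G \<in> A_set n dd S v (Suc i)"
  shows "Suc i * (sum dd ({1..n} - S) - 3 * D^2) \<le> card (Sigma (S \<inter> nb G v) (Bib ({1..n} - S) v G))"
    and "card (Sigma (S \<inter> nb G v) (Bib ({1..n} - S) v G)) \<le> Suc i * sum dd ({1..n} - S)"
proof -
  have Gw: "G \<in> graphs_with_degrees n dd" and ci: "card (S \<inter> nb G v) = Suc i" using G by (auto simp: A_alt)
  have sg: "G \<in> simple_graphs n" using Gw by (rule gwd_sg)
  have fT: "finite ({1..n} - S)" by simp
  have T: "{1..n} - S \<subseteq> {1..n}" by auto
  have e: "card (Sigma (S \<inter> nb G v) (Bib ({1..n} - S) v G)) = (\<Sum>a\<in>S \<inter> nb G v. card (Bib ({1..n} - S) v G a))"
    by (rule card_SigmaI) (simp add: nb_finite[OF sg], use Bib_finite[OF sg fT] in blast)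
  show "Suc i * (sum dd ({1..n} - S) - 3 * D^2) \<le> card (Sigma (S \<inter> nb G v) (Bib ({1..n} - S) v G))"
    unfolding e using sum_bounded_below[of "S \<inter> nb G v" "sum dd ({1..n} - S) - 3 * D^2" "\<lambda>a. card (Bib ({1..n} - S) v G a)"]
      Bib_lower[OF Gw dm T] ci by simp
  show "card (Sigma (S \<inter> nb G v) (Bib ({1..n} - S) v G)) \<le> Suc i * sum dd ({1..n} - S)"
    unfolding e using sum_bounded_above[of "S \<inter> nb G v" "\<lambda>a. card (Bib ({1..n} - S) v G a)" "sum dd ({1..n} - S)"]
      Bib_upper[OF Gw T] ci by simp
qed

lemma switch_ineqs:
  assumes S: "S \<subseteq> {1..n}" and vS: "v \<in> S" and dm: "\<forall>x\<in>{1..n}. dd x \<le> D"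
  shows "card (A_set n dd S v i) * ((dd v - i) * (sum dd S - 4 * D^2))
           \<le> card (A_set n dd S v (Suc i)) * (Suc i * sum dd ({1..n} - S))"
    and "card (A_set n dd S v (Suc i)) * (Suc i * (sum dd ({1..n} - S) - 3 * D^2))
           \<le> card (A_set n dd S v i) * ((dd v - i) * sum dd S)"
proof -
  note ce = count_eq[OF S vS, of dd i]
  show "card (A_set n dd S v i) * ((dd v - i) * (sum dd S - 4 * D^2))
           \<le> card (A_set n dd S v (Suc i)) * (Suc i * sum dd ({1..n} - S))"
  proof -
    have "card (A_set n dd S v i) * ((dd v - i) * (sum dd S - 4 * D^2))
        \<le> (\<Sum>G\<in>A_set n dd S v i. card (Sigma (({1..n} - S) \<inter> nb G v) (Fib S v G)))"
      using sum_bounded_below[of "A_set n dd S v i" "(dd v - i) * (sum dd S - 4 * D^2)"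
          "\<lambda>G. card (Sigma (({1..n} - S) \<inter> nb G v) (Fib S v G))"] Fw_bounds(1)[OF S vS dm] by simp
    also have "\<dots> = (\<Sum>G\<in>A_set n dd S v (Suc i). card (Sigma (S \<inter> nb G v) (Bib ({1..n} - S) v G)))" by (rule ce)
    also have "\<dots> \<le> card (A_set n dd S v (Suc i)) * (Suc i * sum dd ({1..n} - S))"
      using sum_bounded_above[of "A_set n dd S v (Suc i)" "\<lambda>G. card (Sigma (S \<inter> nb G v) (Bib ({1..n} - S) v G))"
          "Suc i * sum dd ({1..n} - S)"] Bw_bounds(2)[OF S vS dm] by simp
    finally show ?thesis .
  qed
  show "card (A_set n dd S v (Suc i)) * (Suc i * (sum dd ({1..n} - S) - 3 * D^2))
           \<le> card (A_set n dd S v i) * ((dd v - i) * sum dd S)"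
  proof -
    have "card (A_set n dd S v (Suc i)) * (Suc i * (sum dd ({1..n} - S) - 3 * D^2))
        \<le> (\<Sum>G\<in>A_set n dd S v (Suc i). card (Sigma (S \<inter> nb G v) (Bib ({1..n} - S) v G)))"
      using sum_bounded_below[of "A_set n dd S v (Suc i)" "Suc i * (sum dd ({1..n} - S) - 3 * D^2)"
          "\<lambda>G. card (Sigma (S \<inter> nb G v) (Bib ({1..n} - S) v G))"] Bw_bounds(1)[OF S vS dm] by simp
    also have "\<dots> = (\<Sum>G\<in>A_set n dd S v i. card (Sigma (({1..n} - S) \<inter> nb G v) (Fib S v G)))" by (rule ce[symmetric])
    also have "\<dots> \<le> card (A_set n dd S v i) * ((dd v - i) * sum dd S)"
      using sum_bounded_above[of "A_set n dd S v i" "\<lambda>G. card (Sigma (({1..n} - S) \<inter> nb G v) (Fib S v G))"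
          "(dd v - i) * sum dd S"] Fw_bounds(2)[OF S vS dm] by simp
    finally show ?thesis .
  qed
qed



lemma card_filter_sum: "finite A \<Longrightarrow> card {x\<in>A. P x} = (\<Sum>x\<in>A. if P x then 1 else 0)"
  using sum.inter_filter[of A "\<lambda>_. 1::nat" P] by simp

lemma handshake: assumes G: "G \<in> simple_graphs n"
  shows "(\<Sum>x\<in>{1..n}. degree G x) = 2 * card G"
proof -
  have fG: "finite G" using sg_finite[OF G] .
  have "(\<Sum>x\<in>{1..n}. degree G x) = (\<Sum>x\<in>{1..n}. \<Sum>e\<in>G. if x \<in> e then 1 else 0)"
    unfolding degree_def using card_filter_sum[OF fG] by simp
  also have "\<dots> = (\<Sum>e\<in>G. \<Sum>x\<in>{1..n}. if x \<in> e then 1 else 0)" by (rule sum.swap)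
  also have "\<dots> = (\<Sum>e\<in>G. 2)"
  proof (rule sum.cong[OF refl])
    fix e assume "e \<in> G"
    then obtain p q where e: "e = {p,q}" "p \<noteq> q" "p \<in> {1..n}" "q \<in> {1..n}" using sg_mem[OF G] by blast
    have "(\<Sum>x\<in>{1..n}. if x \<in> e then 1 else 0) = card {x\<in>{1..n}. x \<in> e}"
      by (rule card_filter_sum[symmetric]) simp
    also have "{x\<in>{1..n}. x \<in> e} = {p,q}" using e by auto
    finally show "(\<Sum>x\<in>{1..n}. if x \<in> e then 1 else 0) = (2::nat)" using e by simp
  qed
  finally show ?thesis by simp
qed

lemma inc_gen: assumes "a \<noteq> b" "a \<notin> {x,y}" "b \<notin> {x,y}"
  shows "card {e\<in>{{x,a},{y,b}}. z \<in> e} = of_bool (z=x) + of_bool (z=y) + of_bool (z=a) + of_bool (z=b)"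
proof (cases "x = y")
  case True
  have "{e\<in>{{x,a},{y,b}}. z \<in> e} = (if z = x then {{x,a},{x,b}} else if z = a then {{x,a}} else if z = b then {{x,b}} else {})"
    using assms True by auto
  moreover have "{x,a} \<noteq> {x,b}" using assms by (auto simp: doubleton_eq_iff)
  ultimately show ?thesis using assms True by auto
next
  case False
  have "distinct [x,a,y,b]" using assms False by auto
  from inc2[OF this, of z] show ?thesis using assms False by auto
qed

lemma improve:
  assumes G: "G \<in> simple_graphs n" and ab: "{a,b} \<in> G" and a: "a \<notin> {x,y}" and b: "b \<notin> {x,y}"
    and xa: "{x,a} \<notin> G" and yb: "{y,b} \<notin> G" and x: "x \<in> {1..n}" and y: "y \<in> {1..n}"
  shows "G - {{a,b}} \<union> {{x,a},{y,b}} \<in> simple_graphs n"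
    and "card (G - {{a,b}} \<union> {{x,a},{y,b}}) = Suc (card G)"
    and "degree (G - {{a,b}} \<union> {{x,a},{y,b}}) z = degree G z + of_bool (z=x) + of_bool (z=y)"
proof -
  have ab': "a \<noteq> b" "a \<in> {1..n}" "b \<in> {1..n}" using sg_edge[OF G ab] by auto
  have "insert {x,a} (insert {y,b} (G - {{a,b}})) \<in> simple_graphs n"
    using a b ab' x y by (intro sg_insert sg_diff G) auto
  thus "G - {{a,b}} \<union> {{x,a},{y,b}} \<in> simple_graphs n" by simp
  have fG: "finite G" using sg_finite[OF G] .
  have ne: "{x,a} \<noteq> {y,b}" using a ab' by (auto simp: doubleton_eq_iff)
  have "card (G - {{a,b}} \<union> {{x,a},{y,b}}) = card (insert {x,a} (insert {y,b} (G - {{a,b}})))" by simp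
  also have "\<dots> = Suc (Suc (card (G - {{a,b}})))" using fG xa yb ne by simp
  also have "card (G - {{a,b}}) = card G - 1" using ab fG by simp
  moreover have "card G > 0" using ab fG card_gt_0_iff by blast
  ultimately show "card (G - {{a,b}} \<union> {{x,a},{y,b}}) = Suc (card G)" by linarith
  have h: "degree (G - {{a,b}} \<union> {{x,a},{y,b}}) z + card {e\<in>{{a,b}}. z \<in> e} = degree G z + card {e\<in>{{x,a},{y,b}}. z \<in> e}"
  proof -
    have y1: "{{x,a},{y,b}} \<inter> G = {}" using xa yb by blast
    have x1: "{{a,b}} \<subseteq> G" using ab by blast
    show ?thesis by (rule degree_swap[OF fG x1 y1]) simp
  qed
  have "card {e\<in>{{a,b}}. z \<in> e} = of_bool (z=a) + of_bool (z=b)"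
  proof -
    have "{e\<in>{{a,b}}. z \<in> e} = (if z = a \<or> z = b then {{a,b}} else {})" by auto
    thus ?thesis using ab' by auto
  qed
  with h inc_gen[OF ab'(1) a b, of z] show "degree (G - {{a,b}} \<union> {{x,a},{y,b}}) z = degree G z + of_bool (z=x) + of_bool (z=y)"
    by simp
qed

lemma add_edge:
  assumes G: "G \<in> simple_graphs n" and xy: "x \<noteq> y" "{x,y} \<notin> G" and x: "x \<in> {1..n}" and y: "y \<in> {1..n}"
  shows "insert {x,y} G \<in> simple_graphs n" and "card (insert {x,y} G) = Suc (card G)"
    and "degree (insert {x,y} G) z = degree G z + of_bool (z=x) + of_bool (z=y)"
proof -
  show "insert {x,y} G \<in> simple_graphs n" by (rule sg_insert[OF G xy(1) x y])
  have fG: "finite G" using sg_finite[OF G] .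
  show "card (insert {x,y} G) = Suc (card G)" using fG xy by simp
  have h: "degree (G - {} \<union> {{x,y}}) z + card {e\<in>{}. z \<in> e} = degree G z + card {e\<in>{{x,y}}. z \<in> e}"
  proof -
    have y1: "{{x,y}} \<inter> G = {}" using xy by blast
    show ?thesis by (rule degree_swap[OF fG _ y1]) simp_all
  qed
  have "{e\<in>{{x,y}}. z \<in> e} = (if z = x \<or> z = y then {{x,y}} else {})" by auto
  with h xy(1) show "degree (insert {x,y} G) z = degree G z + of_bool (z=x) + of_bool (z=y)" by auto
qed


lemma nb_le_D: assumes G: "G \<in> simple_graphs n" and le: "\<forall>x\<in>{1..n}. degree G x \<le> dd x"
  and dm: "\<forall>x\<in>{1..n}. dd x \<le> D" shows "card (nb G z) \<le> D"
proof (cases "z \<in> {1..n}")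
  case True thus ?thesis using card_nb[OF G, of z] le dm by fastforce
next
  case False thus ?thesis using nb_out[OF G False] by simp
qed

lemma exists_graph:
  assumes dm: "\<forall>x\<in>{1..n}. dd x \<le> D" and ev: "even (sum dd {1..n})"
    and big: "3 * D^2 + 4 * D < sum dd {1..n}"
  shows "graphs_with_degrees n dd \<noteq> {}"
proof -
  define H where "H = {G\<in>simple_graphs n. \<forall>x\<in>{1..n}. degree G x \<le> dd x}"
  have fH: "finite H" unfolding H_def by (rule finite_subset[OF _ sg_finite_all[of n]]) auto
  have "{} \<in> H" unfolding H_def simple_graphs_def degree_def by simp
  hence neH: "H \<noteq> {}" by blast
  have "Max (card ` H) \<in> card ` H" using fH neH by simp
  then obtain G where GH: "G \<in> H" and Gm: "card G = Max (card ` H)" by auto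
  have mx: "\<And>G'. G' \<in> H \<Longrightarrow> card G' \<le> card G" using Gm fH by simp
  have sg: "G \<in> simple_graphs n" and le: "\<forall>x\<in>{1..n}. degree G x \<le> dd x" using GH by (auto simp: H_def)
  have nbD: "\<And>z. card (nb G z) \<le> D" using nb_le_D[OF sg le dm] .
  have fG: "finite G" using sg_finite[OF sg] .
  have all: "\<forall>x\<in>{1..n}. degree G x = dd x"
  proof (rule ccontr)
    assume nall: "\<not> (\<forall>x\<in>{1..n}. degree G x = dd x)"
    define Def where "Def = {x\<in>{1..n}. degree G x < dd x}"
    have DefV: "Def \<subseteq> {1..n}" unfolding Def_def by auto
    have Dne: "Def \<noteq> {}" using nall le unfolding Def_def by force
    have clique: "\<forall>x\<in>Def. \<forall>y\<in>Def. x \<noteq> y \<longrightarrow> {x,y} \<in> G"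
    proof (intro ballI impI, rule ccontr)
      fix x y assume x: "x \<in> Def" and y: "y \<in> Def" and xy: "x \<noteq> y" and nxy: "{x,y} \<notin> G"
      have xV: "x \<in> {1..n}" and yV: "y \<in> {1..n}" using x y DefV by auto
      note ae = add_edge[OF sg xy nxy xV yV]
      have "insert {x,y} G \<in> H"
        unfolding H_def
      proof (intro CollectI conjI ballI)
        show "insert {x,y} G \<in> simple_graphs n" by (rule ae(1))
        fix z assume zV: "z \<in> {1..n}"
        show "degree (insert {x,y} G) z \<le> dd z"
          unfolding ae(3) using x y xy le zV unfolding Def_def by auto
      qed
      from mx[OF this] ae(2) show False by simp
    qed
    obtain x0 where x0: "x0 \<in> Def" using Dne by blast
    have fDef: "finite Def" using DefV finite_subset by blast
    have cD: "card Def \<le> D"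
    proof -
      have "Def - {x0} \<subseteq> nb G x0"
      proof
        fix z assume z: "z \<in> Def - {x0}"
        have c0: "\<forall>y\<in>Def. x0 \<noteq> y \<longrightarrow> {x0,y} \<in> G" using clique x0 by (rule bspec)
        have "{x0,z} \<in> G" using c0 z by simp
        thus "z \<in> nb G x0" by (simp add: nb_def)
      qed
      hence "card (Def - {x0}) \<le> card (nb G x0)" by (rule card_mono[OF nb_finite[OF sg]])
      moreover have "card (Def - {x0}) = card Def - 1" using x0 fDef by simp
      moreover have "card (nb G x0) < dd x0" using card_nb[OF sg, of x0] x0 unfolding Def_def by auto
      moreover have "dd x0 \<le> D" using dm x0 DefV by auto
      moreover have "card Def > 0" using x0 fDef card_gt_0_iff by blast
      ultimately show ?thesis by linarith
    qed
    have sumdiff: "sum dd {1..n} = (\<Sum>x\<in>{1..n}. degree G x) + (\<Sum>x\<in>{1..n}. dd x - degree G x)"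
      using le by (simp add: sum.distrib[symmetric])
    have defsum: "(\<Sum>x\<in>{1..n}. dd x - degree G x) = (\<Sum>x\<in>Def. dd x - degree G x)"
      by (rule sum.mono_neutral_right) (use DefV le in \<open>auto simp: Def_def\<close>)
    have "(\<Sum>x\<in>Def. dd x - degree G x) \<le> card Def * D"
      using sum_bounded_above[of Def "\<lambda>x. dd x - degree G x" D] dm DefV by force
    also have "\<dots> \<le> D * D" using cD by simp
    finally have sdeg: "sum dd {1..n} \<le> (\<Sum>x\<in>{1..n}. degree G x) + D * D" using sumdiff defsum by linarith
    obtain x y where x: "x \<in> Def" and y: "y \<in> Def" and xy: "x \<noteq> y \<or> degree G x + 2 \<le> dd x"
    proof (cases "\<exists>x\<in>Def. \<exists>y\<in>Def. x \<noteq> y")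
      case True thus ?thesis using that by blast
    next
      case False
      hence Def1: "Def = {x0}" using x0 by blast
      have "(\<Sum>x\<in>{1..n}. dd x - degree G x) = dd x0 - degree G x0" using defsum Def1 by simp
      moreover have "even (\<Sum>x\<in>{1..n}. dd x - degree G x)"
      proof -
        have e1: "even (\<Sum>x\<in>{1..n}. degree G x)" using handshake[OF sg] by simp
        have e2: "even ((\<Sum>x\<in>{1..n}. degree G x) + (\<Sum>x\<in>{1..n}. dd x - degree G x))"
          using ev sumdiff by simp
        show ?thesis using e1 e2 by simp
      qed
      moreover have "degree G x0 < dd x0" using x0 unfolding Def_def by simp
      ultimately have "degree G x0 + 2 \<le> dd x0" 
      proof -
        assume h: "(\<Sum>x\<in>{1..n}. dd x - degree G x) = dd x0 - degree G x0"
          "even (\<Sum>x\<in>{1..n}. dd x - degree G x)" "degree G x0 < dd x0"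
        have "even (dd x0 - degree G x0)" using h by simp
        moreover have "dd x0 - degree G x0 > 0" using h by simp
        ultimately have "dd x0 - degree G x0 \<ge> 2" by presburger
        thus ?thesis by linarith
      qed
      thus ?thesis using that x0 by blast
    qed
    have xV: "x \<in> {1..n}" and yV: "y \<in> {1..n}" using x y DefV by auto
    define X where "X = insert x (insert y (nb G x))"
    define Y where "Y = insert x (insert y (nb G y))"
    define Bad where "Bad = Sigma X (nb G) \<union> prod.swap ` Sigma Y (nb G)"
    have fX: "finite X" and fY: "finite Y" unfolding X_def Y_def using nb_finite[OF sg] by auto
    have i1: "\<And>a A. finite A \<Longrightarrow> card (insert a A) \<le> Suc (card A)" by (simp add: card_insert_if)
    have cX: "card X \<le> D + 2"
    proof -
      have f1: "finite (nb G x)" by (rule nb_finite[OF sg])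
      hence f2: "finite (insert y (nb G x))" by simp
      have "card X \<le> Suc (card (insert y (nb G x)))" unfolding X_def by (rule i1[OF f2])
      moreover have "card (insert y (nb G x)) \<le> Suc (card (nb G x))" by (rule i1[OF f1])
      ultimately show ?thesis using nbD[of x] by linarith
    qed
    have cY: "card Y \<le> D + 2"
    proof -
      have f1: "finite (nb G y)" by (rule nb_finite[OF sg])
      hence f2: "finite (insert y (nb G y))" by simp
      have "card Y \<le> Suc (card (insert y (nb G y)))" unfolding Y_def by (rule i1[OF f2])
      moreover have "card (insert y (nb G y)) \<le> Suc (card (nb G y))" by (rule i1[OF f1])
      ultimately show ?thesis using nbD[of y] by linarith
    qed
    have sigle: "\<And>Z. finite Z \<Longrightarrow> card (Sigma Z (nb G)) \<le> card Z * D"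
    proof -
      fix Z :: "nat set" assume fZ: "finite Z"
      have "card (Sigma Z (nb G)) = (\<Sum>z\<in>Z. card (nb G z))" by (rule sig_card[OF sg fZ])
      also have "\<dots> \<le> card Z * D" using sum_bounded_above[of Z "\<lambda>z. card (nb G z)" D] nbD by simp
      finally show "card (Sigma Z (nb G)) \<le> card Z * D" .
    qed
    have fBad: "finite Bad" unfolding Bad_def using sig_finite[OF sg fX] sig_finite[OF sg fY] by simp
    have "card Bad \<le> card (Sigma X (nb G)) + card (prod.swap ` Sigma Y (nb G))"
      unfolding Bad_def by (rule card_Un_le)
    also have "\<dots> \<le> card (Sigma X (nb G)) + card (Sigma Y (nb G))"
      using card_image_le[OF sig_finite[OF sg fY], of prod.swap] by simp
    also have "\<dots> \<le> (D + 2) * D + (D + 2) * D"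
      using sigle[OF fX] sigle[OF fY] cX cY by (meson add_le_mono le_trans mult_le_mono1)
    finally have cBad: "card Bad \<le> (D + 2) * D + (D + 2) * D" .
    have cSig: "card (Sigma {1..n} (nb G)) = (\<Sum>x\<in>{1..n}. degree G x)"
      using sig_card[OF sg, of "{1..n}"] card_nb[OF sg] by simp
    have "card Bad < card (Sigma {1..n} (nb G))"
    proof -
      have "(D+2)*D = D*D + 2*D" by (simp add: algebra_simps)
      moreover have "D^2 = D*D" by (simp add: power2_eq_square)
      ultimately show ?thesis using cBad cSig sdeg big by linarith
    qed
    hence "card (Sigma {1..n} (nb G)) - card Bad > 0" by simp
    hence "card (Sigma {1..n} (nb G) - Bad) > 0" using diff_card_le_card_Diff[OF fBad, of "Sigma {1..n} (nb G)"] by linarith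
    then obtain a b where abS: "(a,b) \<in> Sigma {1..n} (nb G)" and abB: "(a,b) \<notin> Bad"
      by (metis DiffE card_gt_0_iff ex_in_conv surj_pair)
    have abG: "{a,b} \<in> G" using abS by (simp add: nb_def)
    have a: "a \<notin> {x,y}" and xa: "{x,a} \<notin> G" using abB abS unfolding Bad_def X_def nb_def by auto
    have "(b,a) \<in> Sigma Y (nb G) \<Longrightarrow> False" using abB unfolding Bad_def by (metis UnI2 image_eqI swap_simp)
    hence b: "b \<notin> {x,y}" and yb: "{y,b} \<notin> G" using abG unfolding Y_def nb_def by (auto simp: insert_commute)
    note im = improve[OF sg abG a b xa yb xV yV]
    have "G - {{a,b}} \<union> {{x,a},{y,b}} \<in> H"
      unfolding H_def
    proof (intro CollectI conjI ballI)
      show "G - {{a,b}} \<union> {{x,a},{y,b}} \<in> simple_graphs n" by (rule im(1))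
      fix z assume zV: "z \<in> {1..n}"
      show "degree (G - {{a,b}} \<union> {{x,a},{y,b}}) z \<le> dd z"
        unfolding im(3) using x y xy le zV unfolding Def_def by auto
    qed
    from mx[OF this] im(2) show False by simp
  qed
  hence "G \<in> graphs_with_degrees n dd" using sg by (simp add: graphs_with_degrees_def)
  thus ?thesis by blast
qed



lemma chain_pos:
  assumes j0: "P j0" "j0 \<le> m"
    and up: "\<And>j. j < m \<Longrightarrow> P j \<Longrightarrow> P (Suc j)"
    and down: "\<And>j. j < m \<Longrightarrow> P (Suc j) \<Longrightarrow> P j"
    and jm: "j \<le> m"
  shows "P j"
proof (cases "j0 \<le> j")
  case True
  show ?thesis using True
  proof (induction rule: dec_induct)
    case base thus ?case by (rule j0(1))
  next
    case (step k) thus ?case using up jm by simp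
  qed
next
  case False
  hence "j \<le> j0" by simp
  thus ?thesis
  proof (induction rule: inc_induct)
    case base thus ?case by (rule j0(1))
  next
    case (step k) thus ?case using down j0(2) by simp
  qed
qed

lemma core:
  fixes dd :: "nat \<Rightarrow> nat" and S :: "nat set" and c :: real and D :: nat
  assumes S: "S \<subseteq> {1..n}" and vS: "v \<in> S" and iv: "i < dd v"
    and dm: "\<forall>x\<in>{1..n}. dd x \<le> D" and ev: "even (sum dd {1..n})"
    and c: "c > 0"
    and h1: "8 * (real D)^2 \<le> real (sum dd S)"
    and h2: "4 * (real D)^2 \<le> c * real (sum dd S)"
    and hT: "c * real (sum dd S) \<le> real (sum dd ({1..n} - S))"
  shows "\<bar>real (card (A_set n dd S v i)) / real (card (A_set n dd S v (i+1)))
           - (real (i+1) / real (dd v - i)) * (real (sum dd ({1..n} - S)) / real (sum dd S))\<bar>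
         \<le> (8 + 3 / c) * ((real (i+1) / real (dd v - i)) * (real (sum dd ({1..n} - S)) / real (sum dd S)))
             * ((real D)^2 / real (sum dd S))"
proof -
  define dS where "dS = sum dd S"
  define dT where "dT = sum dd ({1..n} - S)"
  have vV: "v \<in> {1..n}" using S vS by auto
  have D1: "D \<ge> 1" using dm vV iv by force
  have DD: "real (D^2) = (real D)^2" by simp
  have h1n: "8 * D^2 \<le> dS" using h1 unfolding dS_def by (metis DD of_nat_le_iff of_nat_mult of_nat_numeral)
  have D2: "D^2 \<ge> 1" using D1 by simp
  have dSpos: "4 * D^2 < dS" using h1n D2 by linarith
  have h2': "3 * (real D)^2 < c * real dS" using h2 D2 unfolding dS_def
    by (smt (verit, ccfv_SIG) DD of_nat_le_iff of_nat_1)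
  have dT3: "3 * D^2 < dT"
  proof -
    have "real (3 * D^2) < real dT" using h2' hT unfolding dS_def dT_def by simp
    thus ?thesis by linarith
  qed
  have split: "sum dd {1..n} = dS + dT" unfolding dS_def dT_def
    using sum.subset_diff[of S "{1..n}" dd] S by simp
  have big: "3 * D^2 + 4 * D < sum dd {1..n}"
  proof -
    have "4 * D \<le> 4 * D^2" using D1 by (simp add: power2_eq_square)
    thus ?thesis using split h1n dT3 by linarith
  qed
  have ne: "graphs_with_degrees n dd \<noteq> {}" by (rule exists_graph[OF dm ev big])
  then obtain G0 where G0: "G0 \<in> graphs_with_degrees n dd" by blast
  define j0 where "j0 = card (S \<inter> nb G0 v)"
  have G0A: "G0 \<in> A_set n dd S v j0" using G0 unfolding A_alt j0_def by simp
  have j0le: "j0 \<le> dd v"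
  proof -
    have sg: "G0 \<in> simple_graphs n" using G0 by (rule gwd_sg)
    have "j0 \<le> card (nb G0 v)" unfolding j0_def by (rule card_mono[OF nb_finite[OF sg]]) auto
    thus ?thesis using gwd_deg[OF G0 vV] by simp
  qed
  define a where "a = (\<lambda>j. card (A_set n dd S v j))"
  have ineq1: "\<And>j. a j * ((dd v - j) * (dS - 4 * D^2)) \<le> a (Suc j) * (Suc j * dT)"
    unfolding a_def dS_def dT_def by (rule switch_ineqs(1)[OF S vS dm])
  have ineq2: "\<And>j. a (Suc j) * (Suc j * (dT - 3 * D^2)) \<le> a j * ((dd v - j) * dS)"
    unfolding a_def dS_def dT_def by (rule switch_ineqs(2)[OF S vS dm])
  have apos: "\<And>j. j \<le> dd v \<Longrightarrow> a j > 0"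
  proof -
    fix j assume "j \<le> dd v"
    show "a j > 0"
    proof (rule chain_pos[of "\<lambda>j. a j > 0" j0 "dd v"])
      show "a j0 > 0" unfolding a_def using G0A A_finite card_gt_0_iff by blast
      show "j0 \<le> dd v" by (rule j0le)
      show "j \<le> dd v" by fact
    next
      fix k assume k: "k < dd v" "a k > 0"
      have "a k * ((dd v - k) * (dS - 4 * D^2)) > 0" using k dSpos by simp
      thus "a (Suc k) > 0" using ineq1[of k] by (metis gr0I le_zero_eq mult_is_0 not_less)
    next
      fix k assume k: "k < dd v" "a (Suc k) > 0"
      have "a (Suc k) * (Suc k * (dT - 3 * D^2)) > 0" using k dT3 by simp
      thus "a k > 0" using ineq2[of k] by (metis gr0I le_zero_eq mult_is_0 not_less)
    qed
  qed
  have ai: "a i > 0" using apos iv by simp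
  have asi: "a (Suc i) > 0" using apos iv by simp
  have le4: "4 * D^2 \<le> dS" using dSpos by simp
  have le3: "3 * D^2 \<le> dT" using dT3 by simp
  have r1: "real (a i) * (real (dd v - i) * (real dS - 4 * (real D)^2)) \<le> real (a (Suc i)) * (real (i+1) * real dT)"
  proof -
    have "real (a i) * (real (dd v - i) * real (dS - 4 * D^2)) \<le> real (a (Suc i)) * (real (Suc i) * real dT)"
      using ineq1[of i] by (metis of_nat_le_iff of_nat_mult)
    moreover have "real (dS - 4 * D^2) = real dS - 4 * (real D)^2" using le4 by (simp add: of_nat_diff)
    moreover have "real (Suc i) = real (i+1)" by simp
    ultimately show ?thesis by simp
  qed
  have r2: "real (a (Suc i)) * (real (i+1) * (real dT - 3 * (real D)^2)) \<le> real (a i) * (real (dd v - i) * real dS)"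
  proof -
    have "real (a (Suc i)) * (real (Suc i) * real (dT - 3 * D^2)) \<le> real (a i) * (real (dd v - i) * real dS)"
      using ineq2[of i] by (metis of_nat_le_iff of_nat_mult)
    moreover have "real (dT - 3 * D^2) = real dT - 3 * (real D)^2" using le3 by (simp add: of_nat_diff)
    moreover have "real (Suc i) = real (i+1)" by simp
    ultimately show ?thesis by simp
  qed
  have "\<bar>real (a i) / real (a (Suc i)) - (real (i+1) / real (dd v - i)) * (real dT / real dS)\<bar>
     \<le> (8 + 3 / c) * ((real (i+1) / real (dd v - i)) * (real dT / real dS)) * ((real D)^2 / real dS)"
  proof (rule arith_core)
    show "real (a (Suc i)) > 0" using asi by simp
    show "real (dd v - i) > 0" using iv by simp
    show "real (i+1) > 0" by simp
    show "real dS > 0" using dSpos by simp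
    show "c > 0" by (rule c)
    show "(real D)^2 \<ge> 0" by simp
    show "real (a i) \<ge> 0" by simp
    show "8 * (real D)^2 \<le> real dS" using h1 unfolding dS_def .
    show "c * real dS \<le> real dT" using hT unfolding dS_def dT_def .
    show "real (a i) * (real (dd v - i) * (real dS - 4 * (real D)^2)) \<le> real (a (Suc i)) * (real (i+1) * real dT)" by (rule r1)
    show "real (a (Suc i)) * (real (i+1) * (real dT - 3 * (real D)^2)) \<le> real (a i) * (real (dd v - i) * real dS)" by (rule r2)
  qed
  thus ?thesis unfolding a_def dS_def dT_def by simp
qed



theorem lemma3p1:
  fixes d :: "nat \<Rightarrow> nat \<Rightarrow> nat" and S :: "nat \<Rightarrow> nat set"
    and \<delta> :: "nat \<Rightarrow> real" and c :: real
    and M \<Delta> dS dSbar :: "nat \<Rightarrow> real" and \<gamma> :: "nat \<Rightarrow> real"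
  defines "M \<equiv> (\<lambda>n. real (\<Sum>i\<in>{1..n}. d n i))"
      and "\<Delta> \<equiv> (\<lambda>n. real (d n n))"
      and "dS \<equiv> (\<lambda>n. real (\<Sum>i\<in>S n. d n i))"
      and "dSbar \<equiv> (\<lambda>n. real (\<Sum>i\<in>{1..n} - S n. d n i))"
      and "\<gamma> \<equiv> (\<lambda>n. dS n / M n)"
  assumes d_pos: "\<And>n i. i \<in> {1..n} \<Longrightarrow> 1 \<le> d n i"
    and d_mono: "\<And>n i j. 1 \<le> i \<Longrightarrow> i \<le> j \<Longrightarrow> j \<le> n \<Longrightarrow> d n i \<le> d n j"
    and d_even: "\<And>n. even (\<Sum>i\<in>{1..n}. d n i)"
    and S_sub: "\<And>n. S n \<subseteq> {1..n}"
    and \<delta>_pos: "\<forall>\<^sub>F n in sequentially. \<delta> n > 0"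
    and \<delta>_lim: "\<delta> \<longlonglongrightarrow> 0"
    and \<delta>_inv: "(\<lambda>n. 1 / \<delta> n) \<in> O(\<lambda>n. ln (ln (M n)))"
    and main_ass: "\<forall>\<^sub>F n in sequentially.
        (\<Delta> n)\<^sup>2 * (ln (M n) / \<gamma> n) ^ 12 \<le> \<delta> n * dS n"
    and c_pos: "c > 0"
    and \<gamma>_bound: "\<forall>\<^sub>F n in sequentially. \<gamma> n < 1 - c"
  shows "\<exists>C. \<forall>\<^sub>F n in sequentially. \<forall>v\<in>S n. \<forall>i<d n v.
     \<bar>real (card (A_set n (d n) (S n) v i)) / real (card (A_set n (d n) (S n) v (i + 1)))
        - (real (i + 1) / real (d n v - i)) * (dSbar n / dS n)\<bar>
     \<le> C * ((real (i + 1) / real (d n v - i)) * (dSbar n / dS n)) * ((\<Delta> n)\<^sup>2 / dS n)"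
proof -
  define \<epsilon> :: real where "\<epsilon> = min (1/8) (c/4)"
  have \<epsilon>pos: "\<epsilon> > 0" unfolding \<epsilon>_def using c_pos by simp
  have evd: "\<forall>\<^sub>F n in sequentially. \<delta> n < \<epsilon>" using order_tendstoD(2)[OF \<delta>_lim \<epsilon>pos] .
  have ev3: "\<forall>\<^sub>F n in sequentially. n \<ge> 3" by (rule eventually_ge_at_top)
  have evall: "\<forall>\<^sub>F n in sequentially. \<delta> n > 0 \<and> (\<Delta> n)\<^sup>2 * (ln (M n) / \<gamma> n) ^ 12 \<le> \<delta> n * dS n
      \<and> \<gamma> n < 1 - c \<and> \<delta> n < \<epsilon> \<and> n \<ge> 3"
    using \<delta>_pos main_ass \<gamma>_bound evd ev3 by (intro eventually_conj) auto
  show ?thesis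
  proof (rule exI[of _ "8 + 3 / c"], rule eventually_mono[OF evall], intro ballI allI impI)
    fix n v i
    assume H: "\<delta> n > 0 \<and> (\<Delta> n)\<^sup>2 * (ln (M n) / \<gamma> n) ^ 12 \<le> \<delta> n * dS n
      \<and> \<gamma> n < 1 - c \<and> \<delta> n < \<epsilon> \<and> n \<ge> 3"
      and vS: "v \<in> S n" and iv: "i < d n v"
    have S: "S n \<subseteq> {1..n}" by (rule S_sub)
    have fS: "finite (S n)" using S finite_subset by blast
    have vV: "v \<in> {1..n}" using S vS by auto
    have dm: "\<forall>x\<in>{1..n}. d n x \<le> d n n" using d_mono by auto
    have Mn: "M n \<ge> real n"
    proof -
      have "(\<Sum>i\<in>{1..n}. (1::nat)) \<le> (\<Sum>i\<in>{1..n}. d n i)" by (rule sum_mono) (rule d_pos)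
      hence "n \<le> (\<Sum>i\<in>{1..n}. d n i)" by simp
      thus ?thesis unfolding M_def by (simp only: of_nat_le_iff)
    qed
    have M3: "M n \<ge> 3" using Mn H by linarith
    have dS1: "dS n \<ge> 1"
    proof -
      have "d n v \<le> (\<Sum>i\<in>S n. d n i)" by (rule member_le_sum[OF vS _ fS]) simp
      thus ?thesis unfolding dS_def using d_pos[OF vV] by linarith
    qed
    have split: "M n = dS n + dSbar n"
      unfolding M_def dS_def dSbar_def using sum.subset_diff[of "S n" "{1..n}" "d n"] S
      by (simp add: add.commute)
    have dSb0: "dSbar n \<ge> 0" unfolding dSbar_def by (simp only: of_nat_0_le_iff)
    have \<gamma>pos: "\<gamma> n > 0" and \<gamma>1: "\<gamma> n \<le> 1" unfolding \<gamma>_def using dS1 split dSb0 M3 by auto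
    have lnM: "ln (M n) \<ge> 1"
    proof -
      have "exp 1 \<le> M n" using e_less_272 M3 by linarith
      hence "ln (exp 1) \<le> ln (M n)" using M3 by (subst ln_le_cancel_iff) auto
      thus ?thesis by simp
    qed
    have q1: "ln (M n) / \<gamma> n \<ge> 1"
    proof -
      have "ln (M n) \<le> ln (M n) / \<gamma> n" using \<gamma>pos \<gamma>1 lnM by (simp add: le_divide_eq mult_left_le)
      thus ?thesis using lnM by linarith
    qed
    have X1: "(ln (M n) / \<gamma> n) ^ 12 \<ge> 1" using q1 by (rule one_le_power)
    have "(\<Delta> n)\<^sup>2 \<le> (\<Delta> n)\<^sup>2 * (ln (M n) / \<gamma> n) ^ 12"
      using X1 by (simp add: mult_le_cancel_left1)
    also have "\<dots> \<le> \<delta> n * dS n" using H by simp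
    also have "\<dots> \<le> \<epsilon> * dS n" using H dS1 by (intro mult_right_mono) auto
    finally have De: "(\<Delta> n)\<^sup>2 \<le> \<epsilon> * dS n" .
    have h1: "8 * (real (d n n))^2 \<le> real (sum (d n) (S n))"
    proof -
      have "\<epsilon> * dS n \<le> (1/8) * dS n" using dS1 unfolding \<epsilon>_def by (intro mult_right_mono) auto
      thus ?thesis using De unfolding \<Delta>_def dS_def by simp
    qed
    have h2: "4 * (real (d n n))^2 \<le> c * real (sum (d n) (S n))"
    proof -
      have "\<epsilon> * dS n \<le> (c/4) * dS n" using dS1 unfolding \<epsilon>_def by (intro mult_right_mono) auto
      thus ?thesis using De unfolding \<Delta>_def dS_def by simp
    qed
    have hT: "c * real (sum (d n) (S n)) \<le> real (sum (d n) ({1..n} - S n))"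
    proof -
      have "dS n < (1 - c) * M n" using H M3 unfolding \<gamma>_def by (simp add: divide_less_eq)
      hence "c * M n < dSbar n" using split by (simp add: algebra_simps)
      moreover have "c * dS n \<le> c * M n" using split dSb0 c_pos by (intro mult_left_mono) auto
      ultimately show ?thesis unfolding dS_def dSbar_def by simp
    qed
    have "\<bar>real (card (A_set n (d n) (S n) v i)) / real (card (A_set n (d n) (S n) v (i+1)))
           - (real (i+1) / real (d n v - i)) * (real (sum (d n) ({1..n} - S n)) / real (sum (d n) (S n)))\<bar>
         \<le> (8 + 3 / c) * ((real (i+1) / real (d n v - i)) * (real (sum (d n) ({1..n} - S n)) / real (sum (d n) (S n))))
             * ((real (d n n))^2 / real (sum (d n) (S n)))"
      by (rule core[OF S vS iv dm d_even c_pos h1 h2 hT])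
    thus "\<bar>real (card (A_set n (d n) (S n) v i)) / real (card (A_set n (d n) (S n) v (i + 1)))
        - (real (i + 1) / real (d n v - i)) * (dSbar n / dS n)\<bar>
     \<le> (8 + 3 / c) * ((real (i + 1) / real (d n v - i)) * (dSbar n / dS n)) * ((\<Delta> n)\<^sup>2 / dS n)"
      unfolding dSbar_def dS_def \<Delta>_def by simp
  qed
qed


end
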